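(* Let $G$ be a modified planar graph with $m$ edges and let $\mathcal{T}$ be a separator tree of $G$ of height $\eta=O(\log m)$ in which every node $H$ satisfies $|S(H)|\le c\lceil\sqrt{|E(H)|}\rceil$ for a fixed constant $c$. Let $\mathcal{H}$ be a set of $K$ nodes of $\mathcal{T}$. Then \[\sum_{H\in\mathcal{P}_{\mathcal{T}}(\mathcal{H})}\big(|\partial H|+|F_H|\big)\le\widetilde{O}(\sqrt{mK}).\]
   Context: A modified planar graph is a graph obtained from a planar graph by adding two new vertices $s,t$ and any number of edges incident to them (parallel edges allowed). Separator tree: a rooted binary tree $\mathcal{T}$ whose nodes are regions (edge-induced subgraphs) $H$ of $G$, each storing vertex sets $\partial H$, $S(H)$, $F_H$, defined top-down: the root is $G$ with $\partial G=\emptyset$, $F_G=S(G)$; a non-leaf node $H$ has two children $D_1,D_2$ whose edge sets partition $E(H)$, with $V(D_1)\cap V(D_2)=S(H)$, $\partial D_j=(\partial H\cup S(H))\cap V(D_j)$, and $F_H=S(H)\setminus\partial H$; a node with constantly many edges is a leaf with $S(H)=\emptyset$ and $F_H=V(H)\setminus\partial H$. For a set $\mathcal{H}$ of nodes, $\mathcal{P}_{\mathcal{T}}(\mathcal{H})$ is the set of all nodes lying on a tree path from some $H\in\mathcal{H}$ to the root (including $H$ and the root). $\widetilde{O}$ hides polylogarithmic factors in $m$. *)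

theory Defs
  imports "HOL-Analysis.Analysis"
begin

text \<open>Multigraphs: a finite set of edge identifiers E together with an endpoint map
  ends :: edge => vertex * vertex (parallel edges and loops allowed).  Every graph
  and region is edge-induced: its vertex set is the set of endpoints of its edges.\<close>

definition verts :: "('e \<Rightarrow> 'v \<times> 'v) \<Rightarrow> 'e set \<Rightarrow> 'v set" where
  "verts ends A = (\<Union>e\<in>A. {fst (ends e), snd (ends e)})"

definition planar_graph :: "'v set \<Rightarrow> 'e set \<Rightarrow> ('e \<Rightarrow> 'v \<times> 'v) \<Rightarrow> bool" where
  "planar_graph V E ends \<longleftrightarrow>
     (\<forall>e\<in>E. fst (ends e) \<in> V \<and> snd (ends e) \<in> V) \<and>
     (\<exists>(pos :: 'v \<Rightarrow> complex) (\<gamma> :: 'e \<Rightarrow> real \<Rightarrow> complex).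
        inj_on pos V \<and>
        (\<forall>e\<in>E. simple_path (\<gamma> e) \<and>
                pathstart (\<gamma> e) = pos (fst (ends e)) \<and>
                pathfinish (\<gamma> e) = pos (snd (ends e)) \<and>
                path_image (\<gamma> e) \<inter> pos ` V \<subseteq> {pos (fst (ends e)), pos (snd (ends e))}) \<and>
        (\<forall>e\<in>E. \<forall>e'\<in>E. e \<noteq> e' \<longrightarrow>
                path_image (\<gamma> e) \<inter> path_image (\<gamma> e') \<subseteq> pos ` V))"

text \<open>Modified planar graph: obtained from a planar graph by adding two new vertices s, t
  and any number of edges incident to them.\<close>

definition modified_planar :: "'e set \<Rightarrow> ('e \<Rightarrow> 'v \<times> 'v) \<Rightarrow> bool" where
  "modified_planar E ends \<longleftrightarrow>
     (\<exists>s t. s \<noteq> t \<and>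
        planar_graph (verts ends E - {s, t})
          {e\<in>E. s \<notin> {fst (ends e), snd (ends e)} \<and> t \<notin> {fst (ends e), snd (ends e)}} ends)"

datatype 'e stree = SLeaf "'e set" | SNode "'e stree" "'e stree"

fun sedges :: "'e stree \<Rightarrow> 'e set" where
  "sedges (SLeaf A) = A"
| "sedges (SNode l r) = sedges l \<union> sedges r"

fun ssep :: "('e \<Rightarrow> 'v \<times> 'v) \<Rightarrow> 'e stree \<Rightarrow> 'v set" where
  "ssep ends (SLeaf A) = {}"
| "ssep ends (SNode l r) = verts ends (sedges l) \<inter> verts ends (sedges r)"

text \<open>Nodes are addressed by their path from the root (False = left, True = right).\<close>
fun spositions :: "'e stree \<Rightarrow> bool list set" where
  "spositions (SLeaf A) = {[]}"
| "spositions (SNode l r) = insert [] (Cons False ` spositions l \<union> Cons True ` spositions r)"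

fun subtree :: "'e stree \<Rightarrow> bool list \<Rightarrow> 'e stree" where
  "subtree t [] = t"
| "subtree (SNode l r) (False # p) = subtree l p"
| "subtree (SNode l r) (True # p) = subtree r p"
| "subtree (SLeaf A) (b # p) = SLeaf A"

fun sheight :: "'e stree \<Rightarrow> nat" where
  "sheight (SLeaf A) = 0"
| "sheight (SNode l r) = Suc (max (sheight l) (sheight r))"

text \<open>Boundary \<partial>H, computed top-down: bnd_aux ends B t p is the boundary of the node at
  position p of t, given that the boundary of t itself is B.\<close>
fun bnd_aux :: "('e \<Rightarrow> 'v \<times> 'v) \<Rightarrow> 'v set \<Rightarrow> 'e stree \<Rightarrow> bool list \<Rightarrow> 'v set" where
  "bnd_aux ends B t [] = B"
| "bnd_aux ends B (SNode l r) (False # p) =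
     bnd_aux ends ((B \<union> ssep ends (SNode l r)) \<inter> verts ends (sedges l)) l p"
| "bnd_aux ends B (SNode l r) (True # p) =
     bnd_aux ends ((B \<union> ssep ends (SNode l r)) \<inter> verts ends (sedges r)) r p"
| "bnd_aux ends B (SLeaf A) (b # p) = {}"

definition sbnd :: "('e \<Rightarrow> 'v \<times> 'v) \<Rightarrow> 'e stree \<Rightarrow> bool list \<Rightarrow> 'v set" where
  "sbnd ends T p = bnd_aux ends {} T p"

definition sF :: "('e \<Rightarrow> 'v \<times> 'v) \<Rightarrow> 'e stree \<Rightarrow> bool list \<Rightarrow> 'v set" where
  "sF ends T p = (case subtree T p of
       SLeaf A \<Rightarrow> verts ends A - sbnd ends T p
     | SNode l r \<Rightarrow> ssep ends (SNode l r) - sbnd ends T p)"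

fun valid_stree :: "real \<Rightarrow> 'e stree \<Rightarrow> bool" where
  "valid_stree cL (SLeaf A) \<longleftrightarrow> real (card A) \<le> cL"
| "valid_stree cL (SNode l r) \<longleftrightarrow>
     sedges l \<inter> sedges r = {} \<and> real (card (sedges l \<union> sedges r)) > cL \<and>
     valid_stree cL l \<and> valid_stree cL r"

definition path_closure :: "bool list set \<Rightarrow> bool list set" where
  "path_closure Hs = {q. \<exists>p\<in>Hs. \<exists>r. p = q @ r}"

end

theory Submission
  imports Defs
begin

lemma finite_spositions: "finite (spositions t)"
  by (induction t) auto

lemma spositions_prefix: "q @ r \<in> spositions t \<Longrightarrow> q \<in> spositions t"
proof (induction t arbitrary: q)
  case (SLeaf A) then show ?case by simp
next
  case (SNode l1 r1)
  show ?case
  proof (cases q)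
    case Nil then show ?thesis by simp
  next
    case (Cons b q')
    with SNode.prems have "(b = False \<and> q' @ r \<in> spositions l1) \<or> (b = True \<and> q' @ r \<in> spositions r1)"
      by auto
    then show ?thesis using SNode.IH Cons by auto
  qed
qed

lemma pc_cons: "{p. b # p \<in> path_closure Hs} = path_closure {p. b # p \<in> Hs}"
  unfolding path_closure_def by force

lemma pc_nil: "([] \<in> path_closure Hs) = (Hs \<noteq> {})"
  unfolding path_closure_def by auto

lemma pc_empty: "path_closure {} = {}"
  unfolding path_closure_def by auto

lemma pc_sub: "Hs \<subseteq> spositions t \<Longrightarrow> path_closure Hs \<subseteq> spositions t"
proof
  fix q assume H: "Hs \<subseteq> spositions t" and "q \<in> path_closure Hs"
  then obtain p r where "p \<in> Hs" "p = q @ r" unfolding path_closure_def by blast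
  with H show "q \<in> spositions t" using spositions_prefix by blast
qed

lemma pc_finite: "Hs \<subseteq> spositions t \<Longrightarrow> finite (path_closure Hs)"
  by (rule finite_subset[OF pc_sub finite_spositions])

lemma sum_split:
  fixes g :: "bool list \<Rightarrow> 'a::comm_monoid_add"
  assumes "finite Q"
  shows "(\<Sum>p\<in>Q. g p) = (if [] \<in> Q then g [] else 0)
     + (\<Sum>p\<in>{p. False # p \<in> Q}. g (False # p)) + (\<Sum>p\<in>{p. True # p \<in> Q}. g (True # p))"
proof -
  have fL: "finite {p. False # p \<in> Q}"
    using finite_vimageI[OF assms, of "Cons False"] by (simp add: vimage_def inj_on_def)
  have fR: "finite {p. True # p \<in> Q}"
    using finite_vimageI[OF assms, of "Cons True"] by (simp add: vimage_def inj_on_def)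
  have eq: "Q = (Q \<inter> {[]}) \<union> (Cons False ` {p. False # p \<in> Q} \<union> Cons True ` {p. True # p \<in> Q})"
  proof (rule set_eqI)
    fix x show "x \<in> Q \<longleftrightarrow> x \<in> (Q \<inter> {[]}) \<union> (Cons False ` {p. False # p \<in> Q} \<union> Cons True ` {p. True # p \<in> Q})"
    proof (cases x)
      case (Cons a l) then show ?thesis by (cases a) auto
    qed auto
  qed
  have "(\<Sum>p\<in>Q. g p) = (\<Sum>p\<in>Q \<inter> {[]}. g p) + (\<Sum>p\<in>Cons False ` {p. False # p \<in> Q} \<union> Cons True ` {p. True # p \<in> Q}. g p)"
    by (subst eq, rule sum.union_disjoint) (use fL fR in auto)
  also have "(\<Sum>p\<in>Cons False ` {p. False # p \<in> Q} \<union> Cons True ` {p. True # p \<in> Q}. g p)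
     = (\<Sum>p\<in>Cons False ` {p. False # p \<in> Q}. g p) + (\<Sum>p\<in>Cons True ` {p. True # p \<in> Q}. g p)"
    by (rule sum.union_disjoint) (use fL fR in auto)
  also have "(\<Sum>p\<in>Cons False ` {p. False # p \<in> Q}. g p) = (\<Sum>p\<in>{p. False # p \<in> Q}. g (False # p))"
    by (subst sum.reindex) (auto simp: inj_on_def)
  also have "(\<Sum>p\<in>Cons True ` {p. True # p \<in> Q}. g p) = (\<Sum>p\<in>{p. True # p \<in> Q}. g (True # p))"
    by (subst sum.reindex) (auto simp: inj_on_def)
  also have "(\<Sum>p\<in>Q \<inter> {[]}. g p) = (if [] \<in> Q then g [] else 0)"
    by auto
  finally show ?thesis by (simp add: add.assoc)
qed

lemma subtree_valid: "p \<in> spositions t \<Longrightarrow> valid_stree cL t \<Longrightarrow> valid_stree cL (subtree t p)"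
  by (induction t arbitrary: p) auto

lemma subtree_sedges: "sedges (subtree t p) \<subseteq> sedges t"
  by (induction t p rule: subtree.induct) auto

lemma finite_verts: "finite A \<Longrightarrow> finite (verts ends A)"
  unfolding verts_def by auto

lemma card_verts: "finite A \<Longrightarrow> card (verts ends A) \<le> 2 * card A"
proof -
  assume f: "finite A"
  have "verts ends A = (fst \<circ> ends) ` A \<union> (snd \<circ> ends) ` A" unfolding verts_def by auto
  then have "card (verts ends A) \<le> card ((fst \<circ> ends) ` A) + card ((snd \<circ> ends) ` A)"
    by (simp add: card_Un_le)
  also have "\<dots> \<le> card A + card A" using card_image_le[OF f] by (meson add_mono)
  finally show ?thesis by simp
qed

lemma card_split_bnd:
  assumes "finite X" "Vl \<inter> Vr = S" "finite S"
  shows "card (X \<inter> Vl) + card (X \<inter> Vr) \<le> card X + card S"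
proof -
  have "card (X \<inter> Vl) + card (X \<inter> Vr) = card ((X \<inter> Vl) \<union> (X \<inter> Vr)) + card ((X \<inter> Vl) \<inter> (X \<inter> Vr))"
    by (rule card_Un_Int) (use assms in auto)
  also have "card ((X \<inter> Vl) \<union> (X \<inter> Vr)) \<le> card X" by (rule card_mono) (use assms in auto)
  also have "card ((X \<inter> Vl) \<inter> (X \<inter> Vr)) \<le> card S"
  proof -
    have "(X \<inter> Vl) \<inter> (X \<inter> Vr) \<subseteq> S" using assms by auto
    then show ?thesis by (rule card_mono[OF assms(3)])
  qed
  finally show ?thesis by simp
qed

lemma cs2:
  fixes a b c d :: real
  assumes "a \<ge> 0" "b \<ge> 0" "c \<ge> 0" "d \<ge> 0"
  shows "sqrt (a*b) + sqrt (c*d) \<le> sqrt ((a+c)*(b+d))"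
proof -
  define x where "x = sqrt a"
  define y where "y = sqrt b"
  define u where "u = sqrt c"
  define w where "w = sqrt d"
  have xs: "a = x^2" "b = y^2" "c = u^2" "d = w^2" using assms by (auto simp: x_def y_def u_def w_def)
  have "(x*y + u*w)^2 \<le> (x^2+u^2)*(y^2+w^2)"
  proof -
    have "0 \<le> (x*w - u*y)^2" by simp
    then show ?thesis by (simp add: power2_eq_square algebra_simps)
  qed
  then have "x*y + u*w \<le> sqrt ((x^2+u^2)*(y^2+w^2))" by (rule real_le_rsqrt)
  moreover have "sqrt (a*b) = x*y" "sqrt (c*d) = u*w" by (auto simp: x_def y_def u_def w_def real_sqrt_mult)
  ultimately show ?thesis using xs by simp
qed


lemma bsum_bound:
  assumes "Hs \<subseteq> spositions t" "finite B" "finite (sedges t)"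
  shows "(\<Sum>p\<in>path_closure Hs. card (bnd_aux ends B t p))
     \<le> (sheight t + 1) * (card B + 2 * (\<Sum>p\<in>path_closure Hs. card (ssep ends (subtree t p))))"
  using assms
proof (induction t arbitrary: B Hs)
  case (SLeaf A)
  have fin: "finite (path_closure Hs)" using pc_finite SLeaf by blast
  have "(\<Sum>p\<in>path_closure Hs. card (bnd_aux ends B (SLeaf A) p))
     = (if [] \<in> path_closure Hs then card B else 0)"
    by (subst sum_split[OF fin]) simp
  then show ?case by simp
next
  case (SNode l r)
  define S where "S = ssep ends (SNode l r)"
  define Bl where "Bl = (B \<union> S) \<inter> verts ends (sedges l)"
  define Br where "Br = (B \<union> S) \<inter> verts ends (sedges r)"
  define HL where "HL = {p. False # p \<in> Hs}"
  define HR where "HR = {p. True # p \<in> Hs}"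
  have fin: "finite (path_closure Hs)" using pc_finite SNode by blast
  show ?case
  proof (cases "Hs = {}")
    case True then show ?thesis by (simp add: pc_empty)
  next
    case False
    have HLs: "HL \<subseteq> spositions l" using SNode.prems(1) by (auto simp: HL_def)
    have HRs: "HR \<subseteq> spositions r" using SNode.prems(1) by (auto simp: HR_def)
    have fl: "finite (sedges l)" "finite (sedges r)" using SNode.prems(3) by auto
    have fS: "finite S" unfolding S_def using fl by (simp add: finite_verts)
    have fBl: "finite Bl" unfolding Bl_def by (intro finite_Int disjI2 finite_verts fl)
    have fBr: "finite Br" unfolding Br_def by (intro finite_Int disjI2 finite_verts fl)
    define Sl where "Sl = (\<Sum>p\<in>path_closure HL. card (ssep ends (subtree l p)))"
    define Sr where "Sr = (\<Sum>p\<in>path_closure HR. card (ssep ends (subtree r p)))"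
    define hl where "hl = sheight l"
    define hr where "hr = sheight r"
    define h where "h = sheight (SNode l r)"
    have h: "h = Suc (max hl hr)" by (simp add: h_def hl_def hr_def)
    have IHl: "(\<Sum>p\<in>path_closure HL. card (bnd_aux ends Bl l p)) \<le> (hl + 1) * (card Bl + 2 * Sl)"
      using SNode.IH(1)[OF HLs fBl fl(1)] by (simp add: hl_def Sl_def)
    have IHr: "(\<Sum>p\<in>path_closure HR. card (bnd_aux ends Br r p)) \<le> (hr + 1) * (card Br + 2 * Sr)"
      using SNode.IH(2)[OF HRs fBr fl(2)] by (simp add: hr_def Sr_def)
    have L: "(\<Sum>p\<in>path_closure Hs. card (bnd_aux ends B (SNode l r) p))
       = card B + (\<Sum>p\<in>path_closure HL. card (bnd_aux ends Bl l p)) + (\<Sum>p\<in>path_closure HR. card (bnd_aux ends Br r p))"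
      by (subst sum_split[OF fin]) (simp add: pc_nil False pc_cons HL_def HR_def Bl_def Br_def S_def)
    have R: "(\<Sum>p\<in>path_closure Hs. card (ssep ends (subtree (SNode l r) p))) = card S + Sl + Sr"
      by (subst sum_split[OF fin]) (simp add: pc_nil False pc_cons HL_def HR_def Sl_def Sr_def S_def)
    have BB: "card Bl + card Br \<le> card (B \<union> S) + card S"
      unfolding Bl_def Br_def by (rule card_split_bnd) (use fS SNode.prems(2) in \<open>auto simp: S_def\<close>)
    have BS: "card (B \<union> S) \<le> card B + card S" by (rule card_Un_le)
    have "(hl + 1) * (card Bl + 2 * Sl) \<le> h * (card Bl + 2 * Sl)" by (rule mult_right_mono) (auto simp: h)
    moreover have "(hr + 1) * (card Br + 2 * Sr) \<le> h * (card Br + 2 * Sr)" by (rule mult_right_mono) (auto simp: h)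
    moreover have "h * (card Bl + 2 * Sl) + h * (card Br + 2 * Sr) \<le> h * (card B + 2 * (card S + Sl + Sr))"
    proof -
      have "h * (card Bl + 2 * Sl) + h * (card Br + 2 * Sr) = h * ((card Bl + card Br) + 2 * Sl + 2 * Sr)"
        by (simp add: algebra_simps)
      also have "\<dots> \<le> h * (card B + 2 * (card S + Sl + Sr))"
        by (rule mult_left_mono) (use BB BS in auto)
      finally show ?thesis .
    qed
    ultimately have "card B + (\<Sum>p\<in>path_closure HL. card (bnd_aux ends Bl l p)) + (\<Sum>p\<in>path_closure HR. card (bnd_aux ends Br r p))
        \<le> card B + h * (card B + 2 * (card S + Sl + Sr))" using IHl IHr by linarith
    also have "\<dots> \<le> (h + 1) * (card B + 2 * (card S + Sl + Sr))" by (simp add: algebra_simps)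
    finally show ?thesis unfolding L R h_def by simp
  qed
qed

lemma phi_bound:
  assumes "Hs \<subseteq> spositions t" "valid_stree cL t" "finite (sedges t)"
  shows "(\<Sum>p\<in>path_closure Hs. sqrt (real (card (sedges (subtree t p)))))
     \<le> real (sheight t + 1) * sqrt (real (card Hs) * real (card (sedges t)))"
  using assms
proof (induction t arbitrary: Hs)
  case (SLeaf A)
  show ?case
  proof (cases "Hs = {}")
    case True then show ?thesis by (simp add: pc_empty)
  next
    case False
    then have H: "Hs = {[]}" using SLeaf.prems(1) by auto
    have "path_closure {[]} = {[]}" unfolding path_closure_def by auto
    then show ?thesis using H by simp
  qed
next
  case (SNode l r)
  have fin: "finite (path_closure Hs)" using pc_finite SNode by blast
  have finH: "finite Hs" using SNode.prems(1) finite_spositions finite_subset by blast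
  define HL where "HL = {p. False # p \<in> Hs}"
  define HR where "HR = {p. True # p \<in> Hs}"
  show ?case
  proof (cases "Hs = {}")
    case True then show ?thesis by (simp add: pc_empty)
  next
    case False
    have HLs: "HL \<subseteq> spositions l" using SNode.prems(1) by (auto simp: HL_def)
    have HRs: "HR \<subseteq> spositions r" using SNode.prems(1) by (auto simp: HR_def)
    have fl: "finite (sedges l)" "finite (sedges r)" using SNode.prems(3) by auto
    have vl: "valid_stree cL l" "valid_stree cL r" and dj: "sedges l \<inter> sedges r = {}"
      using SNode.prems(2) by auto
    define h where "h = sheight (SNode l r)"
    define K where "K = real (card Hs)"
    define KL where "KL = real (card HL)"
    define KR where "KR = real (card HR)"
    define m where "m = real (card (sedges (SNode l r)))"
    define ml where "ml = real (card (sedges l))"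
    define mr where "mr = real (card (sedges r))"
    have mm: "m = ml + mr" unfolding m_def ml_def mr_def using card_Un_disjoint[OF fl dj] by simp
    have KK: "KL + KR \<le> K"
    proof -
      have "card HL + card HR = card (Cons False ` HL) + card (Cons True ` HR)"
        by (simp add: card_image)
      also have "\<dots> = card (Cons False ` HL \<union> Cons True ` HR)"
        by (rule card_Un_disjoint[symmetric]) (use finH in \<open>auto simp: HL_def HR_def
           intro: finite_subset[of _ Hs]\<close>)
      also have "\<dots> \<le> card Hs" by (rule card_mono[OF finH]) (auto simp: HL_def HR_def)
      finally show ?thesis unfolding KL_def KR_def K_def by linarith
    qed
    have K1: "K \<ge> 1" using False finH unfolding K_def by (simp add: Suc_leI card_gt_0_iff)
    have IHl: "(\<Sum>p\<in>path_closure HL. sqrt (real (card (sedges (subtree l p))))) \<le> real (sheight l + 1) * sqrt (KL * ml)"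
      using SNode.IH(1)[OF HLs vl(1) fl(1)] by (simp add: KL_def ml_def)
    have IHr: "(\<Sum>p\<in>path_closure HR. sqrt (real (card (sedges (subtree r p))))) \<le> real (sheight r + 1) * sqrt (KR * mr)"
      using SNode.IH(2)[OF HRs vl(2) fl(2)] by (simp add: KR_def mr_def)
    have L: "(\<Sum>p\<in>path_closure Hs. sqrt (real (card (sedges (subtree (SNode l r) p)))))
       = sqrt m + (\<Sum>p\<in>path_closure HL. sqrt (real (card (sedges (subtree l p))))) + (\<Sum>p\<in>path_closure HR. sqrt (real (card (sedges (subtree r p)))))"
      by (subst sum_split[OF fin]) (simp add: pc_nil False pc_cons HL_def HR_def m_def)
    have a: "real (sheight l + 1) * sqrt (KL * ml) \<le> real (h - 1 + 1) * sqrt (KL * ml)"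
      by (rule mult_right_mono) (auto simp: h_def KL_def ml_def)
    have b: "real (sheight r + 1) * sqrt (KR * mr) \<le> real (h - 1 + 1) * sqrt (KR * mr)"
      by (rule mult_right_mono) (auto simp: h_def KR_def mr_def)
    have c: "sqrt (KL * ml) + sqrt (KR * mr) \<le> sqrt (K * m)"
    proof -
      have "sqrt (KL * ml) + sqrt (KR * mr) \<le> sqrt ((KL + KR) * (ml + mr))"
        by (rule cs2) (auto simp: KL_def KR_def ml_def mr_def)
      also have "\<dots> \<le> sqrt (K * m)" using KK mm
        by (simp add: ml_def mr_def mult_right_mono)
      finally show ?thesis .
    qed
    have "m \<le> K * m" using mult_right_mono[OF K1, of m] by (simp add: m_def)
    then have d: "sqrt m \<le> sqrt (K * m)" by simp
    have hpos: "h \<ge> 1" by (simp add: h_def)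
    have "real (h - 1 + 1) * sqrt (KL * ml) + real (h - 1 + 1) * sqrt (KR * mr) \<le> real (h - 1 + 1) * sqrt (K * m)"
      using c by (simp add: distrib_left[symmetric] mult_left_mono del: of_nat_add)
    then have "sqrt m + (\<Sum>p\<in>path_closure HL. sqrt (real (card (sedges (subtree l p))))) + (\<Sum>p\<in>path_closure HR. sqrt (real (card (sedges (subtree r p)))))
       \<le> sqrt (K * m) + real (h - 1 + 1) * sqrt (K * m)" using IHl IHr a b d by linarith
    also have "\<dots> = real (h + 1) * sqrt (K * m)" using hpos by (simp add: algebra_simps)
    finally show ?thesis unfolding L h_def K_def m_def by simp
  qed
qed


definition lt :: "('e \<Rightarrow> 'v \<times> 'v) \<Rightarrow> 'e stree \<Rightarrow> nat" where
  "lt ends t = (case t of SLeaf A \<Rightarrow> card (verts ends A) | SNode _ _ \<Rightarrow> 0)"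

lemma sF_bound:
  assumes "finite (sedges T)"
  shows "card (sF ends T p) \<le> card (ssep ends (subtree T p)) + lt ends (subtree T p)"
proof (cases "subtree T p")
  case (SLeaf A)
  have "A \<subseteq> sedges T" using subtree_sedges[of T p] SLeaf by simp
  then have "finite A" using assms by (rule finite_subset)
  then have "card (verts ends A - sbnd ends T p) \<le> card (verts ends A)"
    by (intro card_mono finite_verts) auto
  then show ?thesis by (simp add: sF_def SLeaf lt_def)
next
  case (SNode l r)
  have "sedges (SNode l r) \<subseteq> sedges T" using subtree_sedges[of T p] SNode by simp
  then have "finite (sedges (SNode l r))" using assms by (rule finite_subset)
  then have "finite (ssep ends (SNode l r))" by (simp add: finite_verts)
  then have "card (ssep ends (SNode l r) - sbnd ends T p) \<le> card (ssep ends (SNode l r))"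
    by (intro card_mono) auto
  then show ?thesis by (simp add: sF_def SNode lt_def)
qed

lemma ceil_sqrt: "real_of_int \<lceil>sqrt (real n)\<rceil> \<le> 2 * sqrt (real n)"
proof (cases "n = 0")
  case True then show ?thesis by simp
next
  case False
  then have "1 \<le> sqrt (real n)" by simp
  moreover have "real_of_int \<lceil>sqrt (real n)\<rceil> \<le> sqrt (real n) + 1" by (rule of_int_ceiling_le_add_one)
  ultimately show ?thesis by linarith
qed

lemma lt_bound:
  assumes "valid_stree cL t" "finite (sedges t)"
  shows "real (lt ends t) \<le> 2 * sqrt (max cL 0) * sqrt (real (card (sedges t)))"
proof (cases t)
  case (SLeaf A)
  have fA: "finite A" using assms SLeaf by simp
  have a: "real (card A) \<le> max cL 0" using assms SLeaf by simp
  have v: "real (card (verts ends A)) \<le> 2 * real (card A)" using card_verts[OF fA, of ends] by linarith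
  have e: "real (card A) = sqrt (real (card A)) * sqrt (real (card A))" by simp
  have s: "sqrt (real (card A)) \<le> sqrt (max cL 0)" using a by simp
  have "sqrt (real (card A)) * sqrt (real (card A)) \<le> sqrt (max cL 0) * sqrt (real (card A))"
    by (rule mult_right_mono[OF s]) simp
  then have "real (card (verts ends A)) \<le> 2 * sqrt (max cL 0) * sqrt (real (card A))"
    using v e by linarith
  then show ?thesis by (simp add: SLeaf lt_def)
next
  case (SNode l r) then show ?thesis by (simp add: lt_def)
qed


theorem mainTheorem5:
  shows "\<forall>(c::real) (c\<eta>::real) (cL::real). \<exists>(C::real) (k::nat).
    \<forall>(E::nat set) (ends::nat \<Rightarrow> nat \<times> nat) (T::nat stree) (Hs::bool list set).
      finite E \<and> modified_planar E ends \<and>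
      valid_stree cL T \<and> sedges T = E \<and>
      real (sheight T) \<le> c\<eta> * log 2 (real (card E) + 2) \<and>
      (\<forall>p\<in>spositions T. real (card (ssep ends (subtree T p)))
            \<le> c * real_of_int \<lceil>sqrt (real (card (sedges (subtree T p))))\<rceil>) \<and>
      Hs \<subseteq> spositions T
      \<longrightarrow> real (\<Sum>p\<in>path_closure Hs. card (sbnd ends T p) + card (sF ends T p))
          \<le> C * sqrt (real (card E) * real (card Hs)) * (log 2 (real (card E) + 2)) ^ k"
proof (intro allI)
  fix c c\<eta> cL :: real
  define c' where "c' = max c 0"
  define s where "s = sqrt (max cL 0)"
  define e where "e = max c\<eta> 0"
  have c'0: "c' \<ge> 0" and s0: "s \<ge> 0" and e0: "e \<ge> 0" by (auto simp: c'_def s_def e_def)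
  show "\<exists>(C::real) (k::nat).
    \<forall>(E::nat set) (ends::nat \<Rightarrow> nat \<times> nat) (T::nat stree) (Hs::bool list set).
      finite E \<and> modified_planar E ends \<and>
      valid_stree cL T \<and> sedges T = E \<and>
      real (sheight T) \<le> c\<eta> * log 2 (real (card E) + 2) \<and>
      (\<forall>p\<in>spositions T. real (card (ssep ends (subtree T p)))
            \<le> c * real_of_int \<lceil>sqrt (real (card (sedges (subtree T p))))\<rceil>) \<and>
      Hs \<subseteq> spositions T
      \<longrightarrow> real (\<Sum>p\<in>path_closure Hs. card (sbnd ends T p) + card (sF ends T p))
          \<le> C * sqrt (real (card E) * real (card Hs)) * (log 2 (real (card E) + 2)) ^ k"
  proof (intro exI[of _ "3 * (e + 1)^2 * (2 * c' + 2 * s)"] exI[of _ 2] allI impI, elim conjE)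
    fix E :: "nat set" and ends :: "nat \<Rightarrow> nat \<times> nat" and T :: "nat stree" and Hs :: "bool list set"
    assume fE: "finite E" and vT: "valid_stree cL T" and eT: "sedges T = E"
      and hT: "real (sheight T) \<le> c\<eta> * log 2 (real (card E) + 2)"
      and sep: "\<forall>p\<in>spositions T. real (card (ssep ends (subtree T p)))
            \<le> c * real_of_int \<lceil>sqrt (real (card (sedges (subtree T p))))\<rceil>"
      and HsT: "Hs \<subseteq> spositions T"
    define Q where "Q = path_closure Hs"
    define L where "L = log 2 (real (card E) + 2)"
    define m where "m = real (card E)"
    define K where "K = real (card Hs)"
    define H where "H = real (sheight T) + 1"
    have QT: "Q \<subseteq> spositions T" unfolding Q_def by (rule pc_sub[OF HsT])
    have fT: "finite (sedges T)" using fE eT by simp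
    have fsub: "\<And>p. finite (sedges (subtree T p))" by (rule finite_subset[OF subtree_sedges fT])
    define SS where "SS = (\<Sum>p\<in>Q. card (ssep ends (subtree T p)))"
    define LS where "LS = (\<Sum>p\<in>Q. lt ends (subtree T p))"
    define BS where "BS = (\<Sum>p\<in>Q. card (sbnd ends T p))"
    define Phi where "Phi = (\<Sum>p\<in>Q. sqrt (real (card (sedges (subtree T p)))))"
    have Phi0: "Phi \<ge> 0" unfolding Phi_def by (intro sum_nonneg) simp
    have L1: "L \<ge> 1" unfolding L_def by simp
    have H1: "H \<ge> 1" unfolding H_def by simp
    have HL: "H \<le> (e + 1) * L"
    proof -
      have "c\<eta> * L \<le> e * L" by (rule mult_right_mono) (use L1 in \<open>auto simp: e_def\<close>)
      then have "real (sheight T) \<le> e * L" using hT unfolding L_def by linarith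
      then show ?thesis using L1 unfolding H_def by (simp add: algebra_simps)
    qed
    have tot: "(\<Sum>p\<in>Q. card (sbnd ends T p) + card (sF ends T p)) \<le> BS + SS + LS"
    proof -
      have "(\<Sum>p\<in>Q. card (sbnd ends T p) + card (sF ends T p))
         \<le> (\<Sum>p\<in>Q. card (sbnd ends T p) + (card (ssep ends (subtree T p)) + lt ends (subtree T p)))"
        by (intro sum_mono add_left_mono sF_bound[OF fT])
      also have "\<dots> = BS + SS + LS" unfolding BS_def SS_def LS_def by (simp add: sum.distrib)
      finally show ?thesis .
    qed
    have BSb: "BS \<le> (sheight T + 1) * (2 * SS)"
      using bsum_bound[OF HsT finite.emptyI fT, of ends] unfolding BS_def SS_def Q_def sbnd_def by simp
    have SSb: "real SS \<le> 2 * c' * Phi"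
    proof -
      have "real SS = (\<Sum>p\<in>Q. real (card (ssep ends (subtree T p))))" unfolding SS_def by simp
      also have "\<dots> \<le> (\<Sum>p\<in>Q. 2 * c' * sqrt (real (card (sedges (subtree T p)))))"
      proof (rule sum_mono)
        fix p assume "p \<in> Q"
        then have "real (card (ssep ends (subtree T p))) \<le> c * real_of_int \<lceil>sqrt (real (card (sedges (subtree T p))))\<rceil>"
          using sep QT by blast
        also have "\<dots> \<le> c' * real_of_int \<lceil>sqrt (real (card (sedges (subtree T p))))\<rceil>"
        proof (rule mult_right_mono)
          have "0 \<le> sqrt (real (card (sedges (subtree T p))))" by simp
          then show "0 \<le> real_of_int \<lceil>sqrt (real (card (sedges (subtree T p))))\<rceil>"
            using le_of_int_ceiling[of "sqrt (real (card (sedges (subtree T p))))"] by linarith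
        qed (simp add: c'_def)
        also have "\<dots> \<le> c' * (2 * sqrt (real (card (sedges (subtree T p)))))"
          by (rule mult_left_mono[OF ceil_sqrt c'0])
        finally show "real (card (ssep ends (subtree T p))) \<le> 2 * c' * sqrt (real (card (sedges (subtree T p))))"
          by simp
      qed
      also have "\<dots> = 2 * c' * Phi" unfolding Phi_def by (simp add: sum_distrib_left)
      finally show ?thesis .
    qed
    have LSb: "real LS \<le> 2 * s * Phi"
    proof -
      have "real LS = (\<Sum>p\<in>Q. real (lt ends (subtree T p)))" unfolding LS_def by simp
      also have "\<dots> \<le> (\<Sum>p\<in>Q. 2 * s * sqrt (real (card (sedges (subtree T p)))))"
      proof (rule sum_mono)
        fix p assume "p \<in> Q"
        then have "valid_stree cL (subtree T p)" using QT subtree_valid vT by blast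
        then show "real (lt ends (subtree T p)) \<le> 2 * s * sqrt (real (card (sedges (subtree T p))))"
          using lt_bound fsub unfolding s_def by blast
      qed
      also have "\<dots> = 2 * s * Phi" unfolding Phi_def by (simp add: sum_distrib_left)
      finally show ?thesis .
    qed
    have Phib: "Phi \<le> H * sqrt (K * m)"
      using phi_bound[OF HsT vT fT] unfolding Phi_def Q_def H_def K_def m_def eT by (simp add: add.commute)
    have sq0: "sqrt (K * m) \<ge> 0" unfolding K_def m_def by simp
    have "real (\<Sum>p\<in>Q. card (sbnd ends T p) + card (sF ends T p)) \<le> real BS + real SS + real LS"
      using tot by linarith
    also have "\<dots> \<le> (2 * H + 1) * real SS + real LS"
    proof -
      have "real BS \<le> real ((sheight T + 1) * (2 * SS))" using BSb by (simp only: of_nat_le_iff)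
      also have "\<dots> = 2 * H * real SS" by (simp add: H_def algebra_simps)
      finally have "real BS \<le> 2 * H * real SS" .
      then show ?thesis by (simp add: algebra_simps)
    qed
    also have "\<dots> \<le> (2 * H + 1) * (2 * c' * Phi) + 2 * s * Phi"
      using SSb LSb H1 by (intro add_mono mult_left_mono) auto
    also have "\<dots> \<le> 3 * H * (2 * c' + 2 * s) * Phi"
    proof -
      have a: "(2 * H + 1) * (2 * c' * Phi) \<le> 3 * H * (2 * c' * Phi)"
        by (rule mult_right_mono) (use H1 c'0 Phi0 in auto)
      have b: "2 * s * Phi \<le> 3 * H * (2 * s * Phi)"
        using mult_right_mono[of 1 "3 * H" "2 * s * Phi"] H1 s0 Phi0 by simp
      show ?thesis using a b by (simp add: algebra_simps)
    qed
    also have "\<dots> \<le> 3 * H * (2 * c' + 2 * s) * (H * sqrt (K * m))"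
      by (rule mult_left_mono[OF Phib]) (use H1 c'0 s0 in auto)
    also have "\<dots> = 3 * (2 * c' + 2 * s) * sqrt (K * m) * H^2" by (simp add: power2_eq_square algebra_simps)
    also have "\<dots> \<le> 3 * (2 * c' + 2 * s) * sqrt (K * m) * ((e + 1) * L)^2"
      by (rule mult_left_mono) (use HL H1 c'0 s0 sq0 in \<open>auto intro: power_mono\<close>)
    also have "\<dots> = 3 * (e + 1)^2 * (2 * c' + 2 * s) * sqrt (K * m) * L ^ 2"
      by (simp add: power_mult_distrib)
    also have "\<dots> = 3 * (e + 1)^2 * (2 * c' + 2 * s) * sqrt (m * K) * L ^ 2"
      by (simp only: mult.commute[of K m])
    finally show "real (\<Sum>p\<in>path_closure Hs. card (sbnd ends T p) + card (sF ends T p))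
          \<le> 3 * (e + 1)^2 * (2 * c' + 2 * s) * sqrt (real (card E) * real (card Hs)) * (log 2 (real (card E) + 2)) ^ 2"
      unfolding Q_def m_def K_def L_def .
  qed
qed

end
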